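(* Let $\Omega\subseteq\mathbb{R}^n$ ($n>1$) be open, let $\lambda\neq0$ be a complex number, let $\underline{f}$ be a vector-valued function on $\Omega$ and set $u=\partial_{\underline{x}}\underline{f}-\underline{f}^2$. Assume that $\underline{g}=\sum_{j=1}^n g_je_j$ is a vector-valued solution of \[\underline{g}\,(-\Delta_n+u)+2\sum_{j=1}^n g_j\,\partial_{x_j}\underline{f}=\lambda^2\underline{g}.\] Then the scalar-valued function $\phi=[\partial_{\underline{x}}^{-\underline{f}}\underline{g}]_0$ and the bivector-valued function $H_2=[\partial_{\underline{x}}^{-\underline{f}}\underline{g}]_2$ satisfy \[(\phi+H_2)(-\Delta_n+u)+2\sum_{j=1}^n [e_jH_2]_1\,\partial_{x_j}\underline{f}=\lambda^2(\phi+H_2).\] Here, for a Clifford-valued function $G$, $G(-\Delta_n+u)$ stands for $-\Delta_nG+G\,u$.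
   Context: $\mathbb{R}_{0,n}$ is the real Clifford algebra generated by an orthonormal basis $e_1,\dots,e_n$ of $\mathbb{R}^n$ with relations $e_je_k+e_ke_j=-2\delta_{jk}$, with basis $e_A$ ($A\subseteq\{1,\dots,n\}$); $\mathbb{C}_n=\mathbb{R}_{0,n}\otimes\mathbb{C}$. For an element $a$, $[a]_k$ denotes its projection onto the $k$-vectors (span of $e_A$ with $|A|=k$); $0$-vectors are scalars, $2$-vectors bivectors. The Dirac operator is $\partial_{\underline{x}}=\sum_{j=1}^n e_j\partial_{x_j}$, acting from the left; $\Delta_n=-\partial_{\underline{x}}^2$ is the Laplacian. $M^f$ is right multiplication by $f$, and $\partial_{\underline{x}}^{-f}g=\partial_{\underline{x}}g-gf$. *)

theory Defs
  imports "HOL-Analysis.Analysis"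
begin

text \<open>Complexified Clifford algebra C_n = R_{0,n} (x) C with generators indexed by a
finite linearly ordered type 'n (so n = CARD('n)).  An element is given by its
coefficients on the basis blades e_A, A a subset of the generator set.\<close>

type_synonym 'n cl = "'n set \<Rightarrow> complex"

text \<open>Sign in e_A e_B = sgn(A,B) e_(A symmetric difference B), using e_j e_j = -1.\<close>
definition blade_sign :: "'n::linorder set \<Rightarrow> 'n set \<Rightarrow> complex" where
  "blade_sign A B = (-1) ^ (card {(a, b). a \<in> A \<and> b \<in> B \<and> b < a} + card (A \<inter> B))"

definition cl_mult :: "('n::{finite,linorder}) cl \<Rightarrow> 'n cl \<Rightarrow> 'n cl" (infixl "\<otimes>\<^sub>c" 70) where
  "x \<otimes>\<^sub>c y = (\<lambda>C. \<Sum>A\<in>UNIV. blade_sign A (A - C \<union> (C - A)) * x A * y (A - C \<union> (C - A)))"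

definition cl_add :: "'n cl \<Rightarrow> 'n cl \<Rightarrow> 'n cl" (infixl "\<oplus>\<^sub>c" 65) where
  "x \<oplus>\<^sub>c y = (\<lambda>A. x A + y A)"

definition cl_minus :: "'n cl \<Rightarrow> 'n cl \<Rightarrow> 'n cl" (infixl "\<ominus>\<^sub>c" 65) where
  "x \<ominus>\<^sub>c y = (\<lambda>A. x A - y A)"

definition cl_scale :: "complex \<Rightarrow> 'n cl \<Rightarrow> 'n cl" (infixr "\<cdot>\<^sub>c" 75) where
  "c \<cdot>\<^sub>c x = (\<lambda>A. c * x A)"

definition cl_sum :: "('i \<Rightarrow> 'n cl) \<Rightarrow> 'i set \<Rightarrow> 'n cl" where
  "cl_sum F I = (\<lambda>A. \<Sum>i\<in>I. F i A)"

definition cl_e :: "'n \<Rightarrow> 'n cl" where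
  "cl_e j = (\<lambda>A. if A = {j} then 1 else 0)"

definition grade :: "nat \<Rightarrow> 'n cl \<Rightarrow> 'n cl" where
  "grade k x = (\<lambda>A. if card A = k then x A else 0)"

definition is_vector :: "'n cl \<Rightarrow> bool" where
  "is_vector x \<longleftrightarrow> grade 1 x = x"

definition pd :: "'n::finite \<Rightarrow> ((real, 'n) vec \<Rightarrow> complex) \<Rightarrow> (real, 'n) vec \<Rightarrow> complex" where
  "pd j F x = vector_derivative (\<lambda>t. F (x + t *\<^sub>R axis j 1)) (at 0)"

fun ipd :: "'n::finite list \<Rightarrow> ((real, 'n) vec \<Rightarrow> complex) \<Rightarrow> (real, 'n) vec \<Rightarrow> complex" where
  "ipd [] F = F"
| "ipd (j # js) F = pd j (ipd js F)"

text \<open>C-infinity on an open set: all iterated partial derivatives exist and are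
(Frechet) differentiable, hence continuous.\<close>
definition smooth_on :: "((real, 'n::finite) vec) set \<Rightarrow> ((real, 'n) vec \<Rightarrow> complex) \<Rightarrow> bool" where
  "smooth_on \<Omega> F \<longleftrightarrow> (\<forall>js. ipd js F differentiable_on \<Omega>)"

definition cl_smooth_on :: "((real, 'n::finite) vec) set \<Rightarrow> ((real, 'n) vec \<Rightarrow> 'n cl) \<Rightarrow> bool" where
  "cl_smooth_on \<Omega> F \<longleftrightarrow> (\<forall>A. smooth_on \<Omega> (\<lambda>y. F y A))"

definition cl_pd :: "'n::finite \<Rightarrow> ((real, 'n) vec \<Rightarrow> 'n cl) \<Rightarrow> (real, 'n) vec \<Rightarrow> 'n cl" where
  "cl_pd j F x = (\<lambda>A. pd j (\<lambda>y. F y A) x)"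

definition dirac :: "((real, 'n::{finite,linorder}) vec \<Rightarrow> 'n cl) \<Rightarrow> (real, 'n) vec \<Rightarrow> 'n cl" where
  "dirac F x = cl_sum (\<lambda>j. cl_e j \<otimes>\<^sub>c cl_pd j F x) UNIV"

definition laplace :: "((real, 'n::{finite,linorder}) vec \<Rightarrow> 'n cl) \<Rightarrow> (real, 'n) vec \<Rightarrow> 'n cl" where
  "laplace F x = (\<lambda>A. - dirac (dirac F) x A)"

definition dirac_tw :: "((real, 'n::{finite,linorder}) vec \<Rightarrow> 'n cl) \<Rightarrow> ((real, 'n) vec \<Rightarrow> 'n cl) \<Rightarrow> (real, 'n) vec \<Rightarrow> 'n cl" where
  "dirac_tw f g x = dirac g x \<ominus>\<^sub>c (g x \<otimes>\<^sub>c f x)"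

definition potential :: "((real, 'n::{finite,linorder}) vec \<Rightarrow> 'n cl) \<Rightarrow> (real, 'n) vec \<Rightarrow> 'n cl" where
  "potential f x = dirac f x \<ominus>\<^sub>c (f x \<otimes>\<^sub>c f x)"

definition schr :: "((real, 'n::{finite,linorder}) vec \<Rightarrow> 'n cl) \<Rightarrow> ((real, 'n) vec \<Rightarrow> 'n cl) \<Rightarrow> (real, 'n) vec \<Rightarrow> 'n cl" where
  "schr u G x = (\<lambda>A. - laplace G x A) \<oplus>\<^sub>c (G x \<otimes>\<^sub>c u x)"

end

theory Submission
  imports Defs
begin

abbreviation sd :: "'a set \<Rightarrow> 'a set \<Rightarrow> 'a set" where "sd A B \<equiv> A - B \<union> (B - A)"

definition invc :: "'n::linorder set \<Rightarrow> 'n set \<Rightarrow> nat" where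
  "invc A B = card {(a, b). a \<in> A \<and> b \<in> B \<and> b < a}"

lemma invc_sd_left:
  fixes A B C :: "'n::{finite,linorder} set"
  shows "invc A C + invc B C = invc (sd A B) C + 2 * invc (A \<inter> B) C"
proof -
  define S where "S X = {(a, b). a \<in> X \<and> b \<in> C \<and> b < a}" for X :: "'n set"
  have fin: "finite (S X)" for X by simp
  have 1: "S A = S (A - B) \<union> S (A \<inter> B)" "S B = S (B - A) \<union> S (A \<inter> B)"
    "S (sd A B) = S (A - B) \<union> S (B - A)" unfolding S_def by auto
  have 2: "S (A - B) \<inter> S (A \<inter> B) = {}" "S (B - A) \<inter> S (A \<inter> B) = {}" "S (A - B) \<inter> S (B - A) = {}"
    unfolding S_def by auto
  have "invc X C = card (S X)" for X unfolding invc_def S_def by simp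
  then show ?thesis using 1 2 by (simp add: card_Un_disjoint fin)
qed

lemma invc_sd_right:
  fixes A B C :: "'n::{finite,linorder} set"
  shows "invc C A + invc C B = invc C (sd A B) + 2 * invc C (A \<inter> B)"
proof -
  define S where "S X = {(a, b). a \<in> C \<and> b \<in> X \<and> b < a}" for X :: "'n set"
  have fin: "finite (S X)" for X by simp
  have 1: "S A = S (A - B) \<union> S (A \<inter> B)" "S B = S (B - A) \<union> S (A \<inter> B)"
    "S (sd A B) = S (A - B) \<union> S (B - A)" unfolding S_def by auto
  have 2: "S (A - B) \<inter> S (A \<inter> B) = {}" "S (B - A) \<inter> S (A \<inter> B) = {}" "S (A - B) \<inter> S (B - A) = {}"
    unfolding S_def by auto
  have "invc C X = card (S X)" for X unfolding invc_def S_def by simp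
  then show ?thesis using 1 2 by (simp add: card_Un_disjoint fin)
qed

lemma card_int_sd_left:
  fixes A B C :: "'n::finite set"
  shows "card (A \<inter> C) + card (B \<inter> C) = card (sd A B \<inter> C) + 2 * card (A \<inter> B \<inter> C)"
proof -
  have 1: "A \<inter> C = ((A - B) \<inter> C) \<union> (A \<inter> B \<inter> C)" "B \<inter> C = ((B - A) \<inter> C) \<union> (A \<inter> B \<inter> C)"
    "sd A B \<inter> C = ((A - B) \<inter> C) \<union> ((B - A) \<inter> C)" by auto
  show ?thesis
    apply (subst 1(1), subst 1(2), subst 1(3))
    apply (subst card_Un_disjoint, simp, simp, blast)+
    by simp
qed

lemma blade_sign_alt: "blade_sign A B = (-1) ^ (invc A B + card (A \<inter> B))"
  unfolding blade_sign_def invc_def by simp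

lemma neg1_pow_eq:
  assumes "a + b = c + 2 * d" shows "((-1::complex) ^ a) * (-1) ^ b = (-1) ^ c"
proof -
  have "((-1::complex) ^ a) * (-1) ^ b = (-1) ^ (c + 2*d)" by (simp add: power_add[symmetric] assms)
  also have "\<dots> = (-1)^c" by (simp add: power_add power_mult)
  finally show ?thesis .
qed

lemma blade_sign_sd_left:
  fixes A B C :: "'n::{finite,linorder} set"
  shows "blade_sign (sd A B) C = blade_sign A C * blade_sign B C"
proof -
  have "(invc A C + card (A \<inter> C)) + (invc B C + card (B \<inter> C)) =
     (invc (sd A B) C + card (sd A B \<inter> C)) + 2 * (invc (A \<inter> B) C + card (A \<inter> B \<inter> C))"
    using invc_sd_left[where A=A and B=B and C=C] card_int_sd_left[where A=A and B=B and C=C] by simp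
  from neg1_pow_eq[OF this] show ?thesis unfolding blade_sign_alt by simp
qed

lemma blade_sign_sd_right:
  fixes A B C :: "'n::{finite,linorder} set"
  shows "blade_sign C (sd A B) = blade_sign C A * blade_sign C B"
proof -
  have e: "C \<inter> X = X \<inter> C" for X by auto
  have "(invc C A + card (C \<inter> A)) + (invc C B + card (C \<inter> B)) =
     (invc C (sd A B) + card (C \<inter> sd A B)) + 2 * (invc C (A \<inter> B) + card (A \<inter> B \<inter> C))"
    using invc_sd_right[where A=A and B=B and C=C] card_int_sd_left[where A=A and B=B and C=C] by (simp add: e)
  from neg1_pow_eq[OF this] show ?thesis unfolding blade_sign_alt by simp
qed

lemma blade_sign_sq: "blade_sign A B * blade_sign A B = 1"
  unfolding blade_sign_def by (simp add: power_add[symmetric] power_mult[symmetric] mult_2[symmetric] power_mult)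

lemma cocycle:
  fixes A B C :: "'n::{finite,linorder} set"
  shows "blade_sign A B * blade_sign (sd A B) C = blade_sign A (sd B C) * blade_sign B C"
  by (simp add: blade_sign_sd_left blade_sign_sd_right)

lemma sd_sd[simp]: "sd A (sd A B) = B" by blast
lemma sd_sd2[simp]: "sd (sd A B) B = A" by blast

lemma cl_mult_alt:
  "(x \<otimes>\<^sub>c y) D = (\<Sum>A\<in>UNIV. \<Sum>B\<in>UNIV. if sd A B = D then blade_sign A B * x A * y B else 0)"
proof -
  have "(\<Sum>B\<in>UNIV. if sd A B = D then blade_sign A B * x A * y B else 0)
      = blade_sign A (sd A D) * x A * y (sd A D)" for A
  proof -
    have "\<And>B. (sd A B = D) = (B = sd A D)" by blast
    then show ?thesis by (simp add: sum.delta')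
  qed
  then show ?thesis unfolding cl_mult_def by simp
qed

lemma cl_mult_assoc:
  fixes x y z :: "('n::{finite,linorder}) cl"
  shows "(x \<otimes>\<^sub>c y) \<otimes>\<^sub>c z = x \<otimes>\<^sub>c (y \<otimes>\<^sub>c z)"
proof
  fix D
  have "((x \<otimes>\<^sub>c y) \<otimes>\<^sub>c z) D = (\<Sum>C\<in>UNIV. \<Sum>A\<in>UNIV. blade_sign C (sd C D) * (blade_sign A (sd A C) * x A * y (sd A C)) * z (sd C D))"
    unfolding cl_mult_def[of "x \<otimes>\<^sub>c y"] unfolding cl_mult_def[of x y]
    by (simp add: sum_distrib_left sum_distrib_right)
  also have "\<dots> = (\<Sum>A\<in>UNIV. \<Sum>C\<in>UNIV. blade_sign C (sd C D) * (blade_sign A (sd A C) * x A * y (sd A C)) * z (sd C D))"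
    by (rule sum.swap)
  also have "\<dots> = (\<Sum>A\<in>UNIV. \<Sum>B\<in>UNIV. blade_sign (sd A B) (sd (sd A B) D) * (blade_sign A B * x A * y B) * z (sd (sd A B) D))"
  proof (rule sum.cong[OF refl])
    fix A :: "'n set"
    show "(\<Sum>C\<in>UNIV. blade_sign C (sd C D) * (blade_sign A (sd A C) * x A * y (sd A C)) * z (sd C D)) =
        (\<Sum>B\<in>UNIV. blade_sign (sd A B) (sd (sd A B) D) * (blade_sign A B * x A * y B) * z (sd (sd A B) D))"
      by (rule sum.reindex_bij_witness[of _ "\<lambda>B. sd A B" "\<lambda>C. sd A C"]) auto
  qed
  also have "\<dots> = (\<Sum>A\<in>UNIV. \<Sum>B\<in>UNIV. blade_sign A (sd A D) * x A * (blade_sign B (sd B (sd A D)) * y B * z (sd B (sd A D))))"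
  proof (intro sum.cong refl)
    fix A B :: "'n set"
    have c: "blade_sign A B * blade_sign (sd A B) (sd (sd A B) D) = blade_sign A (sd A D) * blade_sign B (sd B (sd A D))"
    proof -
      have "blade_sign A B * blade_sign (sd A B) (sd (sd A B) D) = blade_sign A (sd B (sd (sd A B) D)) * blade_sign B (sd (sd A B) D)"
        by (rule cocycle)
      moreover have "sd B (sd (sd A B) D) = sd A D" "sd (sd A B) D = sd B (sd A D)" by blast+
      ultimately show ?thesis by simp
    qed
    have e: "sd (sd A B) D = sd B (sd A D)" by blast
    show "blade_sign (sd A B) (sd (sd A B) D) * (blade_sign A B * x A * y B) * z (sd (sd A B) D) =
         blade_sign A (sd A D) * x A * (blade_sign B (sd B (sd A D)) * y B * z (sd B (sd A D)))"
      using c unfolding e by (simp add: algebra_simps)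
  qed
  also have "\<dots> = (x \<otimes>\<^sub>c (y \<otimes>\<^sub>c z)) D"
    unfolding cl_mult_def[of x "y \<otimes>\<^sub>c z"] unfolding cl_mult_def[of y z]
    by (simp add: sum_distrib_left)
  finally show "((x \<otimes>\<^sub>c y) \<otimes>\<^sub>c z) D = (x \<otimes>\<^sub>c (y \<otimes>\<^sub>c z)) D" .
qed

definition cl_one :: "'n cl" where "cl_one = (\<lambda>A. if A = {} then 1 else 0)"

lemma blade_sign_empty[simp]: "blade_sign {} A = 1" "blade_sign A {} = 1"
  unfolding blade_sign_def by simp_all

lemma cl_mult_one_right[simp]: fixes x :: "('n::{finite,linorder}) cl" shows "x \<otimes>\<^sub>c cl_one = x"
proof
  fix C :: "'n set"
  have "\<And>A. (sd A C = {}) = (A = C)" by blast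
  then show "(x \<otimes>\<^sub>c cl_one) C = x C" unfolding cl_mult_def cl_one_def
    by (simp add: if_distrib[of "\<lambda>t. _ * t"] sum.delta' cong: if_cong)
qed

lemma cl_mult_one_left[simp]: fixes x :: "('n::{finite,linorder}) cl" shows "cl_one \<otimes>\<^sub>c x = x"
proof
  fix C
  show "(cl_one \<otimes>\<^sub>c x) C = x C" unfolding cl_mult_def cl_one_def
    by (simp add: if_distrib[of "\<lambda>t. t * _"] if_distrib[of "\<lambda>t. _ * t"] sum.delta cong: if_cong)
qed

lemma cl_mult_add_right: "x \<otimes>\<^sub>c (y \<oplus>\<^sub>c z) = x \<otimes>\<^sub>c y \<oplus>\<^sub>c x \<otimes>\<^sub>c z"
  unfolding cl_mult_def cl_add_def by (simp add: algebra_simps sum.distrib)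
lemma cl_mult_add_left: "(x \<oplus>\<^sub>c y) \<otimes>\<^sub>c z = x \<otimes>\<^sub>c z \<oplus>\<^sub>c y \<otimes>\<^sub>c z"
  unfolding cl_mult_def cl_add_def by (simp add: algebra_simps sum.distrib)
lemma cl_mult_zero_left: "(\<lambda>_. 0) \<otimes>\<^sub>c x = (\<lambda>_. 0)"
  unfolding cl_mult_def by simp
lemma cl_mult_zero_right: "x \<otimes>\<^sub>c (\<lambda>_. 0) = (\<lambda>_. 0)"
  unfolding cl_mult_def by simp

typedef ('n::"{finite,linorder}") clf = "UNIV :: 'n cl set" morphisms clv CL by simp

setup_lifting type_definition_clf

instantiation clf :: ("{finite,linorder}") ring_1
begin
lift_definition zero_clf :: "'a clf" is "\<lambda>_. 0" .
lift_definition one_clf :: "'a clf" is "cl_one" .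
lift_definition plus_clf :: "'a clf \<Rightarrow> 'a clf \<Rightarrow> 'a clf" is "cl_add" .
lift_definition minus_clf :: "'a clf \<Rightarrow> 'a clf \<Rightarrow> 'a clf" is "cl_minus" .
lift_definition uminus_clf :: "'a clf \<Rightarrow> 'a clf" is "\<lambda>x A. - x A" .
lift_definition times_clf :: "'a clf \<Rightarrow> 'a clf \<Rightarrow> 'a clf" is "cl_mult" .
instance
proof
  fix a b c :: "'a clf"
  show "a * b * c = a * (b * c)" by transfer (rule cl_mult_assoc)
  show "a + b + c = a + (b + c)" by transfer (auto simp: cl_add_def)
  show "a + b = b + a" by transfer (auto simp: cl_add_def)
  show "0 + a = a" by transfer (auto simp: cl_add_def)
  show "- a + a = 0" by transfer (auto simp: cl_add_def)
  show "a - b = a + - b" by transfer (auto simp: cl_add_def cl_minus_def)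
  show "1 * a = a" by transfer simp
  show "a * 1 = a" by transfer simp
  show "(a + b) * c = a * c + b * c" by transfer (rule cl_mult_add_left)
  show "a * (b + c) = a * b + a * c" by transfer (rule cl_mult_add_right)
  show "(0::'a clf) \<noteq> 1" by transfer (auto simp: cl_one_def fun_eq_iff)
qed
end


lemma CL_inj: "CL x = CL y \<longleftrightarrow> x = y"
  by (simp add: CL_inject)

lemma CL_add: "CL (x \<oplus>\<^sub>c y) = CL x + CL y" by (simp add: plus_clf.abs_eq eq_onp_def)
lemma CL_minus: "CL (x \<ominus>\<^sub>c y) = CL x - CL y" by (simp add: minus_clf.abs_eq eq_onp_def)
lemma CL_mult: "CL (x \<otimes>\<^sub>c y) = CL x * CL y" by (simp add: times_clf.abs_eq eq_onp_def)
lemma CL_zero: "CL (\<lambda>_. 0) = 0" by (simp add: zero_clf.abs_eq)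
lemma CL_one: "CL cl_one = 1" by (simp add: one_clf.abs_eq)

lemma CL_sum: "finite I \<Longrightarrow> CL (cl_sum F I) = (\<Sum>i\<in>I. CL (F i))"
proof (induction I rule: finite_induct)
  case empty then show ?case by (simp add: cl_sum_def CL_zero[symmetric])
next
  case (insert i I)
  have "cl_sum F (insert i I) = F i \<oplus>\<^sub>c cl_sum F I"
    using insert by (auto simp: cl_sum_def cl_add_def fun_eq_iff)
  then show ?case using insert by (simp add: CL_add)
qed

definition sc :: "complex \<Rightarrow> ('n::{finite,linorder}) clf" where "sc c = CL (c \<cdot>\<^sub>c cl_one)"

lemma cl_mult_scale_left: fixes x y :: "('n::{finite,linorder}) cl" shows "(c \<cdot>\<^sub>c x) \<otimes>\<^sub>c y = c \<cdot>\<^sub>c (x \<otimes>\<^sub>c y)"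
  unfolding cl_mult_def cl_scale_def by (simp add: sum_distrib_left algebra_simps)
lemma cl_mult_scale_right: fixes x y :: "('n::{finite,linorder}) cl" shows "x \<otimes>\<^sub>c (c \<cdot>\<^sub>c y) = c \<cdot>\<^sub>c (x \<otimes>\<^sub>c y)"
  unfolding cl_mult_def cl_scale_def by (simp add: sum_distrib_left algebra_simps)

lemma CL_scale: "CL (c \<cdot>\<^sub>c x) = sc c * CL x"
  unfolding sc_def CL_mult[symmetric] by (simp add: cl_mult_scale_left)

lemma sc_comm: "sc c * y = y * sc c"
proof -
  obtain x where y: "y = CL x" by (metis clv_inverse)
  show ?thesis unfolding y sc_def CL_mult[symmetric] cl_mult_scale_left cl_mult_scale_right by simp
qed

lemma sc_add: "sc (a + b) = sc a + sc b"
  unfolding sc_def CL_add[symmetric] by (simp add: cl_scale_def cl_add_def fun_eq_iff algebra_simps)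
lemma sc_diff: "sc (a - b) = sc a - sc b"
  unfolding sc_def CL_minus[symmetric] by (simp add: cl_scale_def cl_minus_def fun_eq_iff algebra_simps)
lemma sc_mult: "sc (a * b) = sc a * sc b"
  unfolding sc_def CL_mult[symmetric] cl_mult_scale_left cl_mult_scale_right by (simp add: cl_scale_def algebra_simps)
lemma sc_one: "sc 1 = 1" unfolding sc_def by (simp add: cl_scale_def CL_one)
lemma sc_zero: "sc 0 = 0" unfolding sc_def by (simp add: cl_scale_def CL_zero[symmetric])
lemma sc_two: "sc 2 = 2"
proof -
  have "sc 2 = sc (1 + 1)" by simp
  also have "\<dots> = 1 + 1" by (simp only: sc_add sc_one)
  finally show ?thesis by simp
qed
lemma sc_uminus: "sc (- a) = - sc a" using sc_diff[of 0 a] by (simp add: sc_zero)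

lemma grade1_zero: "grade 1 v = v \<Longrightarrow> card B \<noteq> 1 \<Longrightarrow> v B = 0"
proof -
  assume "grade 1 v = v" "card B \<noteq> 1"
  then have "grade 1 v B = v B" by simp
  then show "v B = 0" using \<open>card B \<noteq> 1\<close> unfolding grade_def by simp
qed

lemma sign_single: "blade_sign {j} {i} = (if i = j then -1 else if i < j then -1 else 1)"
proof -
  have e: "{(a, b). a \<in> {j} \<and> b \<in> {i} \<and> b < a} = (if i < j then {(j,i)} else {})"
    by (auto split: if_splits)
  show ?thesis unfolding blade_sign_def e by auto
qed

lemma cl_e_mult_left: fixes v :: "('n::{finite,linorder}) cl"
  shows "(cl_e j \<otimes>\<^sub>c v) C = blade_sign {j} (sd {j} C) * v (sd {j} C)"
proof -
  have t: "blade_sign A (sd A C) * cl_e j A * v (sd A C) = (if A = {j} then blade_sign {j} (sd {j} C) * v (sd {j} C) else 0)" for A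
  proof (cases "A = {j}")
    case True then show ?thesis by (simp add: cl_e_def)
  next
    case False then show ?thesis by (simp add: cl_e_def)
  qed
  have "(cl_e j \<otimes>\<^sub>c v) C = (\<Sum>A\<in>UNIV. blade_sign A (sd A C) * cl_e j A * v (sd A C))"
    unfolding cl_mult_def by (rule refl)
  also have "\<dots> = (\<Sum>A\<in>UNIV. if A = {j} then blade_sign {j} (sd {j} C) * v (sd {j} C) else 0)"
    by (rule sum.cong[OF refl t])
  also have "\<dots> = blade_sign {j} (sd {j} C) * v (sd {j} C)"
    by (rule trans[OF sum.delta]) simp_all
  finally show ?thesis .
qed

lemma cl_e_mult_right: fixes v :: "('n::{finite,linorder}) cl"
  shows "(v \<otimes>\<^sub>c cl_e j) C = blade_sign (sd {j} C) {j} * v (sd {j} C)"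
proof -
  have t: "blade_sign A (sd A C) * v A * cl_e j (sd A C) = (if A = sd {j} C then blade_sign (sd {j} C) {j} * v (sd {j} C) else 0)" for A
  proof (cases "A = sd {j} C")
    case True
    then have "sd A C = {j}" by (simp only: sd_sd2)
    then show ?thesis using True by (simp add: cl_e_def)
  next
    case False
    then have "sd A C \<noteq> {j}" by (metis sd_sd2)
    then show ?thesis using False by (simp add: cl_e_def)
  qed
  have "(v \<otimes>\<^sub>c cl_e j) C = (\<Sum>A\<in>UNIV. blade_sign A (sd A C) * v A * cl_e j (sd A C))"
    unfolding cl_mult_def by (rule refl)
  also have "\<dots> = (\<Sum>A\<in>UNIV. if A = sd {j} C then blade_sign (sd {j} C) {j} * v (sd {j} C) else 0)"
    by (rule sum.cong[OF refl t])
  also have "\<dots> = blade_sign (sd {j} C) {j} * v (sd {j} C)"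
    by (rule trans[OF sum.delta]) simp_all
  finally show ?thesis .
qed

lemma vec_anticomm: fixes v :: "('n::{finite,linorder}) cl"
  assumes "grade 1 v = v"
  shows "CL (cl_e j) * CL v + CL v * CL (cl_e j) = sc (- 2 * v {j})"
proof -
  have "(cl_e j \<otimes>\<^sub>c v) \<oplus>\<^sub>c (v \<otimes>\<^sub>c cl_e j) = (- 2 * v {j}) \<cdot>\<^sub>c cl_one"
  proof
    fix C :: "'n set"
    define B where "B = sd {j} C"
    have L: "((cl_e j \<otimes>\<^sub>c v) \<oplus>\<^sub>c (v \<otimes>\<^sub>c cl_e j)) C = blade_sign {j} B * v B + blade_sign B {j} * v B"
      unfolding cl_add_def cl_e_mult_left cl_e_mult_right B_def by simp
    have R: "((- 2 * v {j}) \<cdot>\<^sub>c cl_one) C = (if C = {} then - 2 * v {j} else 0)"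
      unfolding cl_scale_def cl_one_def by simp
    show "((cl_e j \<otimes>\<^sub>c v) \<oplus>\<^sub>c (v \<otimes>\<^sub>c cl_e j)) C = ((- 2 * v {j}) \<cdot>\<^sub>c cl_one) C"
      unfolding L R
    proof (cases "card B = 1")
      case False
      then have "v B = 0" using grade1_zero[OF assms] by blast
      moreover have "C \<noteq> {}" using False unfolding B_def by auto
      ultimately show "blade_sign {j} B * v B + blade_sign B {j} * v B = (if C = {} then - 2 * v {j} else 0)" by simp
    next
      case True
      obtain i where Bi: "B = {i}" using card_1_singletonE[OF True] by blast
      show "blade_sign {j} B * v B + blade_sign B {j} * v B = (if C = {} then - 2 * v {j} else 0)"
      proof (cases "i = j")
        case True
        then have "C = {}" using Bi unfolding B_def by blast
        then show ?thesis using Bi True by (simp add: sign_single)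
      next
        case False
        then have "C \<noteq> {}" using Bi unfolding B_def by blast
        then show ?thesis using Bi False by (auto simp add: sign_single)
      qed
    qed
  qed
  then show ?thesis by (metis CL_add CL_mult CL_scale CL_one mult.right_neutral)
qed

lemma card_pairs_left: fixes B :: "'n::{finite,linorder} set"
  shows "card {(a, b). a \<in> {k} \<and> b \<in> B \<and> b < a} = card {b\<in>B. b < k}"
proof -
  have "{(a, b). a \<in> {k} \<and> b \<in> B \<and> b < a} = (\<lambda>b. (k, b)) ` {b\<in>B. b < k}" by auto
  then show ?thesis by (simp add: card_image inj_on_def)
qed

lemma card_pairs_right: fixes B :: "'n::{finite,linorder} set"
  shows "card {(a, b). a \<in> B \<and> b \<in> {k} \<and> b < a} = card {b\<in>B. k < b}"
proof -
  have "{(a, b). a \<in> B \<and> b \<in> {k} \<and> b < a} = (\<lambda>a. (a, k)) ` {b\<in>B. k < b}" by auto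
  then show ?thesis by (simp add: card_image inj_on_def)
qed

lemma card_split3: fixes B :: "'n::{finite,linorder} set"
  shows "card {b\<in>B. b < k} + card {b\<in>B. k < b} + card (B \<inter> {k}) = card B"
proof -
  have e: "B = ({b\<in>B. b < k} \<union> {b\<in>B. k < b}) \<union> (B \<inter> {k})" by auto
  have d1: "({b\<in>B. b < k} \<union> {b\<in>B. k < b}) \<inter> (B \<inter> {k}) = {}" by auto
  have d2: "{b\<in>B. b < k} \<inter> {b\<in>B. k < b} = {}" by auto
  have "card B = card ({b\<in>B. b < k} \<union> {b\<in>B. k < b}) + card (B \<inter> {k})"
    by (subst e, rule card_Un_disjoint[OF _ _ d1]) simp_all
  also have "card ({b\<in>B. b < k} \<union> {b\<in>B. k < b}) = card {b\<in>B. b < k} + card {b\<in>B. k < b}"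
    by (rule card_Un_disjoint[OF _ _ d2]) simp_all
  finally show ?thesis by simp
qed

lemma sign_swap: fixes B :: "'n::{finite,linorder} set"
  shows "blade_sign B {k} = blade_sign {k} B * (-1) ^ (card B + card (B \<inter> {k}))"
proof -
  have i: "{k} \<inter> B = B \<inter> {k}" by auto
  have "blade_sign {k} B * blade_sign B {k} = (-1) ^ (card B + card (B \<inter> {k}))"
    unfolding blade_sign_def card_pairs_left card_pairs_right i
    using card_split3[of B k] by (simp add: power_add[symmetric] algebra_simps)
  then have "blade_sign {k} B * (blade_sign {k} B * blade_sign B {k}) = blade_sign {k} B * (-1) ^ (card B + card (B \<inter> {k}))"
    by simp
  then show ?thesis by (simp add: mult.assoc[symmetric] blade_sign_sq)
qed

lemma grade2_zero: "grade 2 v = v \<Longrightarrow> card B \<noteq> 2 \<Longrightarrow> v B = 0"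
proof -
  assume "grade 2 v = v" "card B \<noteq> 2"
  then have "grade 2 v B = v B" by simp
  then show "v B = 0" using \<open>card B \<noteq> 2\<close> unfolding grade_def by simp
qed

lemma biv_comm: fixes b :: "('n::{finite,linorder}) cl"
  assumes "grade 2 b = b"
  shows "CL (cl_e k) * CL b - CL b * CL (cl_e k) = 2 * CL (grade 1 (cl_e k \<otimes>\<^sub>c b))"
proof -
  have "(cl_e k \<otimes>\<^sub>c b) \<ominus>\<^sub>c (b \<otimes>\<^sub>c cl_e k) = 2 \<cdot>\<^sub>c grade 1 (cl_e k \<otimes>\<^sub>c b)"
  proof
    fix C :: "'n set"
    define B where "B = sd {k} C"
    have C: "C = sd {k} B" unfolding B_def by simp
    have L: "((cl_e k \<otimes>\<^sub>c b) \<ominus>\<^sub>c (b \<otimes>\<^sub>c cl_e k)) C = blade_sign {k} B * b B - blade_sign {k} B * (-1) ^ (card B + card (B \<inter> {k})) * b B"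
      unfolding cl_minus_def cl_e_mult_left cl_e_mult_right B_def[symmetric] sign_swap by simp
    have R: "(2 \<cdot>\<^sub>c grade 1 (cl_e k \<otimes>\<^sub>c b)) C = (if card C = 1 then 2 * (blade_sign {k} B * b B) else 0)"
      unfolding cl_scale_def grade_def cl_e_mult_left B_def[symmetric] by simp
    show "((cl_e k \<otimes>\<^sub>c b) \<ominus>\<^sub>c (b \<otimes>\<^sub>c cl_e k)) C = (2 \<cdot>\<^sub>c grade 1 (cl_e k \<otimes>\<^sub>c b)) C"
      unfolding L R
    proof (cases "card B = 2")
      case False
      then have "b B = 0" using grade2_zero[OF assms] by blast
      then show "blade_sign {k} B * b B - blade_sign {k} B * (-1) ^ (card B + card (B \<inter> {k})) * b B = (if card C = 1 then 2 * (blade_sign {k} B * b B) else 0)" by simp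
    next
      case True
      show "blade_sign {k} B * b B - blade_sign {k} B * (-1) ^ (card B + card (B \<inter> {k})) * b B = (if card C = 1 then 2 * (blade_sign {k} B * b B) else 0)"
      proof (cases "k \<in> B")
        case True
        have "sd {k} B = B - {k}" using True by blast
        then have c1: "card C = 1" using \<open>card B = 2\<close> True C by (simp add: card_Diff_singleton)
        have "B \<inter> {k} = {k}" using True by auto
        then have "card B + card (B \<inter> {k}) = 3" using \<open>card B = 2\<close> by simp
        then show ?thesis using c1 by simp
      next
        case False
        have "sd {k} B = insert k B" using False by blast
        then have c3: "card C = 3" using \<open>card B = 2\<close> False C by simp
        have "B \<inter> {k} = {}" using False by auto
        then have "card B + card (B \<inter> {k}) = 2" using \<open>card B = 2\<close> by simp
        then show ?thesis using c3 by simp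
      qed
    qed
  qed
  then show ?thesis by (metis CL_minus CL_mult CL_scale sc_two)
qed

lemma vecprod_grades: fixes a c :: "('n::{finite,linorder}) cl"
  assumes "grade 1 a = a" "grade 1 c = c" "card C \<noteq> 0" "card C \<noteq> 2"
  shows "(a \<otimes>\<^sub>c c) C = 0"
  unfolding cl_mult_def
proof (rule sum.neutral, intro ballI)
  fix A :: "'n set"
  show "blade_sign A (sd A C) * a A * c (sd A C) = 0"
  proof (cases "card A = 1 \<and> card (sd A C) = 1")
    case True
    obtain p where p: "A = {p}" using card_1_singletonE True by blast
    obtain q where q: "sd A C = {q}" using card_1_singletonE True by blast
    from p q have "A = {p}" "sd A C = {q}" by auto
    then have "C = sd {p} {q}" by blast
    then have "card C = 0 \<or> card C = 2" by (cases "p = q") auto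
    then show ?thesis using assms by auto
  next
    case False
    then show ?thesis using grade1_zero[OF assms(1)] grade1_zero[OF assms(2)] by auto
  qed
qed

lemma grade02_split: fixes h :: "('n::{finite,linorder}) cl"
  assumes "\<And>C. card C \<noteq> 0 \<Longrightarrow> card C \<noteq> 2 \<Longrightarrow> h C = 0"
  shows "grade 0 h \<oplus>\<^sub>c grade 2 h = h"
  using assms unfolding grade_def cl_add_def by (auto simp: fun_eq_iff)

lemma CL_grade0: fixes h :: "('n::{finite,linorder}) cl"
  shows "CL (grade 0 h) = sc (h {})"
proof -
  have "grade 0 h = h {} \<cdot>\<^sub>c cl_one" unfolding grade_def cl_scale_def cl_one_def by (auto simp: fun_eq_iff)
  then show ?thesis by (simp add: CL_scale CL_one)
qed

lemma grade2_grade2[simp]: "grade 2 (grade 2 h) = grade 2 h" unfolding grade_def by auto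

lemma mult_two_commute: fixes x y :: "'a::ring_1" shows "x * (2 * y) = 2 * (x * y)"
  by (simp add: mult_2 distrib_left)

lemma ring_identity:
  fixes e Gk Fk sg B :: "'n::finite \<Rightarrow> 'a::ring_1"
    and Fkj sgk :: "'n \<Rightarrow> 'n \<Rightarrow> 'a"
    and G Fv d1 d2 d3 lam ddH dE Ex h U S :: 'a
  assumes S_def: "S = (\<Sum>j\<in>UNIV. e j * Fk j)"
    and U_def: "U = S - Fv * Fv"
    and h_def: "h = d1 - G * Fv"
    and d1_def: "d1 = (\<Sum>k\<in>UNIV. e k * Gk k)"
    and antiG: "\<And>j. e j * G + G * e j = - (2 * sg j)"
    and antiGk: "\<And>k j. e j * Gk k + Gk k * e j = - (2 * sgk k j)"
    and brk: "\<And>k. e k * h - h * e k = 2 * B k"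
    and ddH_def: "ddH = d3 - (d2 * Fv + (\<Sum>k\<in>UNIV. e k * d1 * Fk k) + (\<Sum>k\<in>UNIV. \<Sum>j\<in>UNIV. e k * e j * Gk k * Fk j)
                     + (\<Sum>k\<in>UNIV. \<Sum>j\<in>UNIV. e k * e j * G * Fkj k j))"
    and dE_def: "dE = d3 + (d1 * U + (\<Sum>k\<in>UNIV. e k * G * ((\<Sum>j\<in>UNIV. e j * Fkj k j) - (Fk k * Fv + Fv * Fk k))))
                    + 2 * (\<Sum>k\<in>UNIV. e k * (\<Sum>j\<in>UNIV. sgk k j * Fk j + sg j * Fkj k j)) - lam * d1"
    and Ex_def: "Ex = d2 + G * U + 2 * (\<Sum>j\<in>UNIV. sg j * Fk j) - lam * G"
    and dE0: "dE = 0" and Ex0: "Ex = 0"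
  shows "ddH + h * U + 2 * (\<Sum>k\<in>UNIV. B k * Fk k) = lam * h"
proof -
  define T1 where "T1 = (\<Sum>k\<in>UNIV. \<Sum>j\<in>UNIV. e k * (G * e j + e j * G + 2 * sg j) * Fkj k j)"
  define T2 where "T2 = (\<Sum>k\<in>UNIV. (e k * G + 2 * sg k + G * e k) * Fk k * Fv)"
  define T3 where "T3 = (\<Sum>m\<in>UNIV. (e m * h - h * e m - 2 * B m) * Fk m)"
  define T4 where "T4 = (\<Sum>k\<in>UNIV. \<Sum>m\<in>UNIV. e k * (e m * Gk k + Gk k * e m + 2 * sgk k m) * Fk m)"
  have z1: "T1 = 0" unfolding T1_def using antiG by (simp add: add.commute)
  have a2: "e k * G + 2 * sg k + G * e k = 0" for k
  proof -
    have "e k * G + 2 * sg k + G * e k = (e k * G + G * e k) + 2 * sg k" by (simp add: algebra_simps)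
    then show ?thesis using antiG[of k] by simp
  qed
  have z2: "T2 = 0" unfolding T2_def using a2 by simp
  have z3: "T3 = 0" unfolding T3_def using brk by simp
  have z4: "T4 = 0" unfolding T4_def using antiGk by (simp add: add.commute)
  have key: "dE - Ex * Fv - (ddH + h * U + 2 * (\<Sum>k\<in>UNIV. B k * Fk k) - lam * h) = T1 - T2 + T3 + T4"
    unfolding T1_def T2_def T3_def T4_def dE_def Ex_def ddH_def U_def h_def S_def d1_def
    by (simp add: algebra_simps sum_distrib_left sum_distrib_right sum.distrib sum_subtractf mult_two_commute) (rule sum.swap)
  have "ddH + h * U + 2 * (\<Sum>k\<in>UNIV. B k * Fk k) - lam * h = 0"
    using key z1 z2 z3 z4 dE0 Ex0 by simp
  then show ?thesis by simp
qed

lemma pd_has: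
  fixes F :: "(real, 'n::finite) vec \<Rightarrow> complex"
  assumes "F differentiable (at x)"
  shows "((\<lambda>t. F (x + t *\<^sub>R axis j 1)) has_vector_derivative pd j F x) (at 0)"
proof -
  have l: "(\<lambda>t::real. x + t *\<^sub>R axis j 1) differentiable (at 0)"
    by (intro derivative_intros)
  have "F differentiable (at ((\<lambda>t::real. x + t *\<^sub>R axis j 1) 0))" using assms by simp
  from differentiable_chain_at[OF l this]
  have "(\<lambda>t. F (x + t *\<^sub>R axis j 1)) differentiable (at 0)" by (simp add: o_def)
  then show ?thesis unfolding pd_def by (simp add: vector_derivative_works[symmetric])
qed

lemma pd_local:
  fixes F G :: "(real, 'n::finite) vec \<Rightarrow> complex"
  assumes "open \<Omega>" "x \<in> \<Omega>" "\<And>y. y \<in> \<Omega> \<Longrightarrow> F y = G y"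
  shows "pd j F x = pd j G x"
proof -
  have t: "((\<lambda>t::real. x + t *\<^sub>R axis j 1) \<longlongrightarrow> x + 0 *\<^sub>R axis j 1) (nhds 0)"
    by (intro tendsto_add tendsto_const tendsto_scaleR filterlim_ident)
  have "eventually (\<lambda>t. x + t *\<^sub>R axis j 1 \<in> \<Omega>) (nhds (0::real))"
    using topological_tendstoD[OF t assms(1)] assms(2) by simp
  then have ev: "eventually (\<lambda>t. t \<in> UNIV \<longrightarrow> F (x + t *\<^sub>R axis j 1) = G (x + t *\<^sub>R axis j 1)) (nhds (0::real))"
    by (rule eventually_mono) (simp add: assms(3))
  show ?thesis unfolding pd_def
    by (rule vector_derivative_cong_eq[OF ev]) simp_all
qed

lemma pd_add:
  fixes F G :: "(real, 'n::finite) vec \<Rightarrow> complex"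
  assumes "F differentiable (at x)" "G differentiable (at x)"
  shows "pd j (\<lambda>y. F y + G y) x = pd j F x + pd j G x"
  unfolding pd_def[of j "\<lambda>y. F y + G y"]
  by (rule vector_derivative_at, rule has_vector_derivative_add[OF pd_has[OF assms(1)] pd_has[OF assms(2)]])

lemma pd_diff:
  fixes F G :: "(real, 'n::finite) vec \<Rightarrow> complex"
  assumes "F differentiable (at x)" "G differentiable (at x)"
  shows "pd j (\<lambda>y. F y - G y) x = pd j F x - pd j G x"
  unfolding pd_def[of j "\<lambda>y. F y - G y"]
  by (rule vector_derivative_at, rule has_vector_derivative_diff[OF pd_has[OF assms(1)] pd_has[OF assms(2)]])

lemma pd_mult:
  fixes F G :: "(real, 'n::finite) vec \<Rightarrow> complex"
  assumes "F differentiable (at x)" "G differentiable (at x)"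
  shows "pd j (\<lambda>y. F y * G y) x = pd j F x * G x + F x * pd j G x"
proof -
  have "((\<lambda>t. F (x + t *\<^sub>R axis j 1) * G (x + t *\<^sub>R axis j 1)) has_vector_derivative
     (F (x + 0 *\<^sub>R axis j 1) * pd j G x + pd j F x * G (x + 0 *\<^sub>R axis j 1))) (at 0)"
    by (rule has_vector_derivative_mult[OF pd_has[OF assms(1)] pd_has[OF assms(2)]])
  then show ?thesis unfolding pd_def[of j "\<lambda>y. F y * G y"]
    by (subst vector_derivative_at) (auto simp: pd_def algebra_simps)
qed

lemma pd_const: "pd j (\<lambda>y. c) x = 0"
  unfolding pd_def by (rule vector_derivative_at) simp

lemma pd_sum:
  fixes F :: "'i \<Rightarrow> (real, 'n::finite) vec \<Rightarrow> complex"
  assumes "finite I" "\<And>i. i \<in> I \<Longrightarrow> F i differentiable (at x)"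
  shows "pd j (\<lambda>y. \<Sum>i\<in>I. F i y) x = (\<Sum>i\<in>I. pd j (F i) x)"
  unfolding pd_def[of j "\<lambda>y. \<Sum>i\<in>I. F i y"]
  by (rule vector_derivative_at, rule has_vector_derivative_sum) (use pd_has assms in auto)

lemma ipd_snoc: "ipd (js @ [j]) F = ipd js (pd j F)"
  by (induction js) simp_all

lemma ipd_local:
  assumes "open \<Omega>" "\<And>y. y \<in> \<Omega> \<Longrightarrow> F y = G y"
  shows "y \<in> \<Omega> \<Longrightarrow> ipd js F y = ipd js G y"
proof (induction js arbitrary: y)
  case Nil then show ?case using assms by simp
next
  case (Cons j js)
  have "pd j (ipd js F) y = pd j (ipd js G) y"
    by (rule pd_local[OF assms(1) Cons.prems]) (rule Cons.IH)
  then show ?case by simp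
qed

lemma diffon_cong:
  assumes "open \<Omega>" "F differentiable_on \<Omega>" "\<And>y. y \<in> \<Omega> \<Longrightarrow> F y = G y"
  shows "G differentiable_on \<Omega>"
proof -
  have "G differentiable (at x)" if "x \<in> \<Omega>" for x
  proof -
    have "F differentiable (at x)" using assms(2) that by (simp add: differentiable_on_eq_differentiable_at[OF assms(1)])
    then obtain D where "(F has_derivative D) (at x)" unfolding differentiable_def by blast
    then have "(G has_derivative D) (at x)"
      by (rule has_derivative_transform_within_open[OF _ assms(1) that]) (simp add: assms(3))
    then show ?thesis unfolding differentiable_def by blast
  qed
  then show ?thesis by (simp add: differentiable_on_eq_differentiable_at[OF assms(1)])
qed

lemma smooth_cong:
  assumes "open \<Omega>" "smooth_on \<Omega> F" "\<And>y. y \<in> \<Omega> \<Longrightarrow> F y = G y"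
  shows "smooth_on \<Omega> G"
  unfolding smooth_on_def
proof
  fix js
  show "ipd js G differentiable_on \<Omega>"
  proof (rule diffon_cong[OF assms(1), of "ipd js F"])
    show "ipd js F differentiable_on \<Omega>" using assms(2) by (simp add: smooth_on_def)
    show "ipd js F y = ipd js G y" if "y \<in> \<Omega>" for y
      by (rule ipd_local[OF assms(1) _ that]) (rule assms(3))
  qed
qed

lemma smooth_diffon: "smooth_on \<Omega> F \<Longrightarrow> F differentiable_on \<Omega>"
proof -
  assume "smooth_on \<Omega> F"
  then have "ipd [] F differentiable_on \<Omega>" unfolding smooth_on_def by blast
  then show ?thesis by simp
qed

lemma smooth_diffble: "open \<Omega> \<Longrightarrow> smooth_on \<Omega> F \<Longrightarrow> x \<in> \<Omega> \<Longrightarrow> F differentiable (at x)"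
proof -
  assume a: "open \<Omega>" "smooth_on \<Omega> F" "x \<in> \<Omega>"
  have "F differentiable_on \<Omega>" using a(2) by (rule smooth_diffon)
  then show ?thesis using a(3) by (simp add: differentiable_on_eq_differentiable_at[OF a(1)])
qed

lemma smooth_pd: "smooth_on \<Omega> F \<Longrightarrow> smooth_on \<Omega> (pd j F)"
  unfolding smooth_on_def
proof
  fix js assume "\<forall>js. ipd js F differentiable_on \<Omega>"
  then have "ipd (js @ [j]) F differentiable_on \<Omega>" by blast
  then show "ipd js (pd j F) differentiable_on \<Omega>" by (simp add: ipd_snoc)
qed

lemma smooth_const: "smooth_on \<Omega> (\<lambda>y. c)"
proof -
  have h: "ipd js (\<lambda>y. c) = (if js = [] then (\<lambda>y. c) else (\<lambda>y. 0))" for js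
  proof (induction js)
    case Nil then show ?case by simp
  next
    case (Cons j js)
    show ?case
    proof (cases "js = []")
      case True then show ?thesis by (simp add: pd_const fun_eq_iff)
    next
      case False then have "ipd js (\<lambda>y. c) = (\<lambda>y. 0)" using Cons by simp
      then show ?thesis using False by (simp only: ipd.simps) (simp add: pd_const)
    qed
  qed
  show ?thesis unfolding smooth_on_def
  proof
    fix js
    show "ipd js (\<lambda>y. c) differentiable_on \<Omega>" by (cases "js = []") (simp_all add: h)
  qed
qed

definition Dm :: "(real, 'n::finite) vec set \<Rightarrow> nat \<Rightarrow> ((real, 'n) vec \<Rightarrow> complex) \<Rightarrow> bool" where
  "Dm \<Omega> m P \<longleftrightarrow> (\<forall>js. length js \<le> m \<longrightarrow> ipd js P differentiable_on \<Omega>)"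

lemma smooth_Dm: "smooth_on \<Omega> F \<longleftrightarrow> (\<forall>m. Dm \<Omega> m F)"
  unfolding smooth_on_def Dm_def by auto

lemma Dm_mono: "Dm \<Omega> m P \<Longrightarrow> k \<le> m \<Longrightarrow> Dm \<Omega> k P"
  unfolding Dm_def by auto

lemma ipd_add_m:
  assumes "open \<Omega>" "Dm \<Omega> m P" "Dm \<Omega> m Q"
  shows "length js \<le> Suc m \<Longrightarrow> y \<in> \<Omega> \<Longrightarrow> ipd js (\<lambda>y. P y + Q y) y = ipd js P y + ipd js Q y"
proof (induction js arbitrary: y)
  case Nil then show ?case by simp
next
  case (Cons j js)
  have l: "length js \<le> m" using Cons.prems by simp
  have "ipd (j # js) (\<lambda>y. P y + Q y) y = pd j (ipd js (\<lambda>y. P y + Q y)) y" by simp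
  also have "\<dots> = pd j (\<lambda>y. ipd js P y + ipd js Q y) y"
    by (rule pd_local[OF assms(1) Cons.prems(2)]) (use Cons.IH l in simp)
  also have "\<dots> = pd j (ipd js P) y + pd j (ipd js Q) y"
  proof (rule pd_add)
    have "ipd js P differentiable_on \<Omega>" "ipd js Q differentiable_on \<Omega>" using assms(2,3) l by (simp_all add: Dm_def)
    then show "ipd js P differentiable (at y)" "ipd js Q differentiable (at y)"
      using Cons.prems(2) by (simp_all add: differentiable_on_eq_differentiable_at[OF assms(1)])
  qed
  finally show ?case by simp
qed

lemma Dm_add:
  assumes "open \<Omega>" "Dm \<Omega> m P" "Dm \<Omega> m Q"
  shows "Dm \<Omega> m (\<lambda>y. P y + Q y)"
  unfolding Dm_def
proof (intro allI impI)
  fix js :: "'a list" assume l: "length js \<le> m"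
  have "(\<lambda>y. ipd js P y + ipd js Q y) differentiable_on \<Omega>"
    using assms l by (auto simp: Dm_def intro!: differentiable_on_add)
  then show "ipd js (\<lambda>y. P y + Q y) differentiable_on \<Omega>"
    by (rule diffon_cong[OF assms(1)]) (use ipd_add_m[OF assms] l in auto)
qed

lemma smooth_add: "open \<Omega> \<Longrightarrow> smooth_on \<Omega> F \<Longrightarrow> smooth_on \<Omega> G \<Longrightarrow> smooth_on \<Omega> (\<lambda>y. F y + G y)"
  unfolding smooth_Dm using Dm_add by blast

lemma Dm_mult:
  assumes "open \<Omega>"
  shows "smooth_on \<Omega> F \<Longrightarrow> smooth_on \<Omega> G \<Longrightarrow> Dm \<Omega> m (\<lambda>y. F y * G y)"
proof (induction m arbitrary: F G)
  case 0
  then have "F differentiable_on \<Omega>" "G differentiable_on \<Omega>" by (simp_all add: smooth_diffon)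
  then show ?case unfolding Dm_def by auto
next
  case (Suc m)
  show ?case unfolding Dm_def
  proof (intro allI impI)
    fix js :: "'a list" assume l: "length js \<le> Suc m"
    show "ipd js (\<lambda>y. F y * G y) differentiable_on \<Omega>"
    proof (cases js rule: rev_exhaust)
      case Nil
      then show ?thesis using Suc.prems by (simp add: smooth_diffon)
    next
      case (snoc js' j)
      then have l': "length js' \<le> m" using l by simp
      have sF: "smooth_on \<Omega> (pd j F)" and sG: "smooth_on \<Omega> (pd j G)" using Suc.prems smooth_pd by auto
      have D1: "Dm \<Omega> m (\<lambda>y. pd j F y * G y)" by (rule Suc.IH[OF sF Suc.prems(2)])
      have D2: "Dm \<Omega> m (\<lambda>y. F y * pd j G y)" by (rule Suc.IH[OF Suc.prems(1) sG])
      have e1: "pd j (\<lambda>y. F y * G y) y = pd j F y * G y + F y * pd j G y" if "y \<in> \<Omega>" for y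
        by (rule pd_mult) (use smooth_diffble[OF assms] Suc.prems that in auto)
      have e2: "ipd js (\<lambda>y. F y * G y) y = ipd js' (\<lambda>y. pd j F y * G y) y + ipd js' (\<lambda>y. F y * pd j G y) y"
        if "y \<in> \<Omega>" for y
      proof -
        have "ipd js (\<lambda>y. F y * G y) y = ipd js' (pd j (\<lambda>y. F y * G y)) y" using snoc by (simp add: ipd_snoc)
        also have "\<dots> = ipd js' (\<lambda>y. pd j F y * G y + F y * pd j G y) y"
          by (rule ipd_local[OF assms _ that]) (use e1 in auto)
        also have "\<dots> = ipd js' (\<lambda>y. pd j F y * G y) y + ipd js' (\<lambda>y. F y * pd j G y) y"
          by (rule ipd_add_m[OF assms D1 D2]) (use l' that in auto)
        finally show ?thesis .
      qed
      have "(\<lambda>y. ipd js' (\<lambda>y. pd j F y * G y) y + ipd js' (\<lambda>y. F y * pd j G y) y) differentiable_on \<Omega>"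
        using D1 D2 l' by (auto simp: Dm_def intro!: differentiable_on_add)
      then show ?thesis by (rule diffon_cong[OF assms]) (use e2 in auto)
    qed
  qed
qed

lemma smooth_mult: "open \<Omega> \<Longrightarrow> smooth_on \<Omega> F \<Longrightarrow> smooth_on \<Omega> G \<Longrightarrow> smooth_on \<Omega> (\<lambda>y. F y * G y)"
  unfolding smooth_Dm[of _ "\<lambda>y. F y * G y"] using Dm_mult by blast

lemma smooth_sum: assumes "open \<Omega>" shows "finite I \<Longrightarrow> (\<And>i. i \<in> I \<Longrightarrow> smooth_on \<Omega> (F i)) \<Longrightarrow> smooth_on \<Omega> (\<lambda>y. \<Sum>i\<in>I. F i y)"
proof (induction I rule: finite_induct)
  case empty then show ?case by (simp add: smooth_const)
next
  case (insert i I)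
  then show ?case by (simp add: smooth_add assms)
qed

lemma smooth_diff: "open \<Omega> \<Longrightarrow> smooth_on \<Omega> F \<Longrightarrow> smooth_on \<Omega> G \<Longrightarrow> smooth_on \<Omega> (\<lambda>y. F y - G y)"
proof -
  assume a: "open \<Omega>" "smooth_on \<Omega> F" "smooth_on \<Omega> G"
  have "smooth_on \<Omega> (\<lambda>y. F y + (-1) * G y)" using a by (intro smooth_add smooth_mult smooth_const)
  then show ?thesis by simp
qed

lemma smooth_cmult: "open \<Omega> \<Longrightarrow> smooth_on \<Omega> F \<Longrightarrow> smooth_on \<Omega> (\<lambda>y. c * F y)"
  by (intro smooth_mult smooth_const)

abbreviation cs :: "(real, 'n::finite) vec set \<Rightarrow> ((real, 'n) vec \<Rightarrow> 'n cl) \<Rightarrow> bool" where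
  "cs \<equiv> cl_smooth_on"

lemma pd_cmult: "F differentiable (at x) \<Longrightarrow> pd j (\<lambda>y. c * F y) x = c * pd j F x"
  using pd_mult[of "\<lambda>y. c" x F j] by (simp add: pd_const)

context fixes \<Omega> :: "(real, 'n::{finite,linorder}) vec set" assumes op: "open \<Omega>"
begin

lemma cs_add: "cs \<Omega> F \<Longrightarrow> cs \<Omega> G \<Longrightarrow> cs \<Omega> (\<lambda>y. F y \<oplus>\<^sub>c G y)"
  unfolding cl_smooth_on_def cl_add_def by (simp add: smooth_add op)

lemma cs_minus: "cs \<Omega> F \<Longrightarrow> cs \<Omega> G \<Longrightarrow> cs \<Omega> (\<lambda>y. F y \<ominus>\<^sub>c G y)"
  unfolding cl_smooth_on_def cl_minus_def by (simp add: smooth_diff op)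

lemma cs_scale: "cs \<Omega> F \<Longrightarrow> cs \<Omega> (\<lambda>y. c \<cdot>\<^sub>c F y)"
  unfolding cl_smooth_on_def cl_scale_def by (simp add: smooth_cmult op)

lemma cs_const: "cs \<Omega> (\<lambda>y. K)"
  unfolding cl_smooth_on_def by (simp add: smooth_const)

lemma cs_mult: "cs \<Omega> F \<Longrightarrow> cs \<Omega> G \<Longrightarrow> cs \<Omega> (\<lambda>y. F y \<otimes>\<^sub>c G y)"
  unfolding cl_smooth_on_def cl_mult_def
  by (intro allI smooth_sum op finite smooth_mult smooth_const) auto

lemma cs_sum: "finite I \<Longrightarrow> (\<And>i. i \<in> I \<Longrightarrow> cs \<Omega> (F i)) \<Longrightarrow> cs \<Omega> (\<lambda>y. cl_sum (\<lambda>i. F i y) I)"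
  unfolding cl_smooth_on_def cl_sum_def by (intro allI smooth_sum op) auto

lemma cs_pd: "cs \<Omega> F \<Longrightarrow> cs \<Omega> (cl_pd j F)"
proof -
  assume a: "cs \<Omega> F"
  have e: "(\<lambda>y. cl_pd j F y A) = pd j (\<lambda>y. F y A)" for A unfolding cl_pd_def by simp
  show ?thesis unfolding cl_smooth_on_def e using a smooth_pd unfolding cl_smooth_on_def by blast
qed

lemma dirac_eq: "dirac F = (\<lambda>y. cl_sum (\<lambda>j. cl_e j \<otimes>\<^sub>c cl_pd j F y) UNIV)"
  unfolding dirac_def by simp

lemma cs_dirac: "cs \<Omega> F \<Longrightarrow> cs \<Omega> (dirac F)"
  unfolding dirac_eq by (intro cs_sum finite cs_mult cs_const cs_pd)

lemma cs_grade: "cs \<Omega> F \<Longrightarrow> cs \<Omega> (\<lambda>y. grade k (F y))"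
  unfolding cl_smooth_on_def grade_def
proof
  fix A assume "\<forall>A. smooth_on \<Omega> (\<lambda>y. F y A)"
  then show "smooth_on \<Omega> (\<lambda>y. if card A = k then F y A else 0)" by (cases "card A = k") (simp_all add: smooth_const)
qed

lemma cs_smul: "cs \<Omega> F \<Longrightarrow> cs \<Omega> G \<Longrightarrow> cs \<Omega> (\<lambda>y. F y B \<cdot>\<^sub>c G y)"
  unfolding cl_smooth_on_def cl_scale_def by (simp add: smooth_mult op)

lemma cs_comp: "cs \<Omega> F \<Longrightarrow> smooth_on \<Omega> (\<lambda>y. F y A)"
  unfolding cl_smooth_on_def by blast

lemma cs_diffble: "cs \<Omega> F \<Longrightarrow> x \<in> \<Omega> \<Longrightarrow> (\<lambda>y. F y A) differentiable (at x)"
  using cs_comp smooth_diffble op by blast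

lemma cl_pd_add: "cs \<Omega> F \<Longrightarrow> cs \<Omega> G \<Longrightarrow> x \<in> \<Omega> \<Longrightarrow>
   cl_pd j (\<lambda>y. F y \<oplus>\<^sub>c G y) x = cl_pd j F x \<oplus>\<^sub>c cl_pd j G x"
  unfolding cl_pd_def cl_add_def by (simp add: pd_add cs_diffble)

lemma cl_pd_minus: "cs \<Omega> F \<Longrightarrow> cs \<Omega> G \<Longrightarrow> x \<in> \<Omega> \<Longrightarrow>
   cl_pd j (\<lambda>y. F y \<ominus>\<^sub>c G y) x = cl_pd j F x \<ominus>\<^sub>c cl_pd j G x"
  unfolding cl_pd_def cl_minus_def by (simp add: pd_diff cs_diffble)

lemma cl_pd_scale: "cs \<Omega> F \<Longrightarrow> x \<in> \<Omega> \<Longrightarrow>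
   cl_pd j (\<lambda>y. c \<cdot>\<^sub>c F y) x = c \<cdot>\<^sub>c cl_pd j F x"
  unfolding cl_pd_def cl_scale_def by (simp add: pd_cmult cs_diffble)

lemma cl_pd_const: "cl_pd j (\<lambda>y. K) x = (\<lambda>_. 0)"
  unfolding cl_pd_def by (simp add: pd_const)

lemma cl_pd_mult: "cs \<Omega> F \<Longrightarrow> cs \<Omega> G \<Longrightarrow> x \<in> \<Omega> \<Longrightarrow>
   cl_pd j (\<lambda>y. F y \<otimes>\<^sub>c G y) x = (cl_pd j F x \<otimes>\<^sub>c G x) \<oplus>\<^sub>c (F x \<otimes>\<^sub>c cl_pd j G x)"
proof -
  assume a: "cs \<Omega> F" "cs \<Omega> G" "x \<in> \<Omega>"
  show ?thesis
  proof
    fix C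
    have d: "(\<lambda>y. blade_sign A (sd A C) * F y A * G y (sd A C)) differentiable (at x)" for A
      using cs_diffble[OF a(1) a(3)] cs_diffble[OF a(2) a(3)] by (intro derivative_intros) auto
    have "cl_pd j (\<lambda>y. F y \<otimes>\<^sub>c G y) x C = pd j (\<lambda>y. \<Sum>A\<in>UNIV. blade_sign A (sd A C) * F y A * G y (sd A C)) x"
      unfolding cl_pd_def cl_mult_def by simp
    also have "\<dots> = (\<Sum>A\<in>UNIV. pd j (\<lambda>y. blade_sign A (sd A C) * F y A * G y (sd A C)) x)"
      by (rule pd_sum) (use d in auto)
    also have "\<dots> = (\<Sum>A\<in>UNIV. blade_sign A (sd A C) * (pd j (\<lambda>y. F y A) x * G x (sd A C) + F x A * pd j (\<lambda>y. G y (sd A C)) x))"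
    proof (rule sum.cong[OF refl])
      fix A
      have "pd j (\<lambda>y. blade_sign A (sd A C) * F y A * G y (sd A C)) x = pd j (\<lambda>y. blade_sign A (sd A C) * (F y A * G y (sd A C))) x"
        by (simp add: mult.assoc)
      also have "\<dots> = blade_sign A (sd A C) * pd j (\<lambda>y. F y A * G y (sd A C)) x"
        using cs_diffble[OF a(1) a(3)] cs_diffble[OF a(2) a(3)] by (intro pd_cmult derivative_intros) auto
      also have "\<dots> = blade_sign A (sd A C) * (pd j (\<lambda>y. F y A) x * G x (sd A C) + F x A * pd j (\<lambda>y. G y (sd A C)) x)"
        using cs_diffble[OF a(1) a(3)] cs_diffble[OF a(2) a(3)] by (simp add: pd_mult)
      finally show "pd j (\<lambda>y. blade_sign A (sd A C) * F y A * G y (sd A C)) x = \<dots>" .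
    qed
    also have "\<dots> = ((cl_pd j F x \<otimes>\<^sub>c G x) \<oplus>\<^sub>c (F x \<otimes>\<^sub>c cl_pd j G x)) C"
      unfolding cl_add_def cl_mult_def cl_pd_def by (simp add: algebra_simps sum.distrib)
    finally show "cl_pd j (\<lambda>y. F y \<otimes>\<^sub>c G y) x C = ((cl_pd j F x \<otimes>\<^sub>c G x) \<oplus>\<^sub>c (F x \<otimes>\<^sub>c cl_pd j G x)) C" .
  qed
qed

lemma cl_pd_sum: "finite I \<Longrightarrow> (\<And>i. i \<in> I \<Longrightarrow> cs \<Omega> (F i)) \<Longrightarrow> x \<in> \<Omega> \<Longrightarrow>
   cl_pd j (\<lambda>y. cl_sum (\<lambda>i. F i y) I) x = cl_sum (\<lambda>i. cl_pd j (F i) x) I"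
  unfolding cl_pd_def cl_sum_def by (auto simp: fun_eq_iff intro!: pd_sum cs_diffble)

lemma cl_pd_grade: "cs \<Omega> F \<Longrightarrow> x \<in> \<Omega> \<Longrightarrow> cl_pd j (\<lambda>y. grade k (F y)) x = grade k (cl_pd j F x)"
  unfolding cl_pd_def grade_def by (auto simp: fun_eq_iff pd_const)

lemma cl_pd_smul: "cs \<Omega> F \<Longrightarrow> cs \<Omega> G \<Longrightarrow> x \<in> \<Omega> \<Longrightarrow>
   cl_pd j (\<lambda>y. F y B \<cdot>\<^sub>c G y) x = (cl_pd j F x B \<cdot>\<^sub>c G x) \<oplus>\<^sub>c (F x B \<cdot>\<^sub>c cl_pd j G x)"
  unfolding cl_pd_def cl_scale_def cl_add_def by (simp add: fun_eq_iff pd_mult cs_diffble)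

lemma cl_pd_local: "x \<in> \<Omega> \<Longrightarrow> (\<And>y. y \<in> \<Omega> \<Longrightarrow> F y = G y) \<Longrightarrow> cl_pd j F x = cl_pd j G x"
  unfolding cl_pd_def by (auto simp: fun_eq_iff intro!: pd_local[OF op])

lemma dirac_local: "x \<in> \<Omega> \<Longrightarrow> (\<And>y. y \<in> \<Omega> \<Longrightarrow> F y = G y) \<Longrightarrow> dirac F x = dirac G x"
  unfolding dirac_def using cl_pd_local by metis

end

abbreviation E :: "'n::{finite,linorder} \<Rightarrow> 'n clf" where "E j \<equiv> CL (cl_e j)"

lemma CL_dirac: "CL (dirac F x) = (\<Sum>j\<in>UNIV. E j * CL (cl_pd j F x))"
  unfolding dirac_def by (simp add: CL_sum CL_mult)

context fixes \<Omega> :: "(real, 'n::{finite,linorder}) vec set" assumes op: "open \<Omega>"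
begin

lemma CL_pd_add: "cs \<Omega> F \<Longrightarrow> cs \<Omega> G \<Longrightarrow> x \<in> \<Omega> \<Longrightarrow>
   CL (cl_pd j (\<lambda>y. F y \<oplus>\<^sub>c G y) x) = CL (cl_pd j F x) + CL (cl_pd j G x)"
  by (simp add: cl_pd_add[OF op] CL_add)

lemma CL_pd_minus: "cs \<Omega> F \<Longrightarrow> cs \<Omega> G \<Longrightarrow> x \<in> \<Omega> \<Longrightarrow>
   CL (cl_pd j (\<lambda>y. F y \<ominus>\<^sub>c G y) x) = CL (cl_pd j F x) - CL (cl_pd j G x)"
  by (simp add: cl_pd_minus[OF op] CL_minus)

lemma CL_pd_mult: "cs \<Omega> F \<Longrightarrow> cs \<Omega> G \<Longrightarrow> x \<in> \<Omega> \<Longrightarrow>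
   CL (cl_pd j (\<lambda>y. F y \<otimes>\<^sub>c G y) x) = CL (cl_pd j F x) * CL (G x) + CL (F x) * CL (cl_pd j G x)"
  by (simp add: cl_pd_mult[OF op] CL_add CL_mult)

lemma CL_pd_scale: "cs \<Omega> F \<Longrightarrow> x \<in> \<Omega> \<Longrightarrow>
   CL (cl_pd j (\<lambda>y. c \<cdot>\<^sub>c F y) x) = sc c * CL (cl_pd j F x)"
  by (simp add: cl_pd_scale[OF op] CL_scale)

lemma CL_pd_const: "CL (cl_pd j (\<lambda>y. K) x) = 0"
  by (simp add: cl_pd_const[OF op] CL_zero)

lemma CL_pd_sum: "finite I \<Longrightarrow> (\<And>i. i \<in> I \<Longrightarrow> cs \<Omega> (F i)) \<Longrightarrow> x \<in> \<Omega> \<Longrightarrow>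
   CL (cl_pd j (\<lambda>y. cl_sum (\<lambda>i. F i y) I) x) = (\<Sum>i\<in>I. CL (cl_pd j (F i) x))"
  by (simp add: cl_pd_sum[OF op] CL_sum)

lemma CL_pd_smul: "cs \<Omega> F \<Longrightarrow> cs \<Omega> G \<Longrightarrow> x \<in> \<Omega> \<Longrightarrow>
   CL (cl_pd j (\<lambda>y. F y B \<cdot>\<^sub>c G y) x) = sc (cl_pd j F x B) * CL (G x) + sc (F x B) * CL (cl_pd j G x)"
  by (simp add: cl_pd_smul[OF op] CL_add CL_scale)

lemma CL_dirac_add: "cs \<Omega> F \<Longrightarrow> cs \<Omega> G \<Longrightarrow> x \<in> \<Omega> \<Longrightarrow>
   CL (dirac (\<lambda>y. F y \<oplus>\<^sub>c G y) x) = CL (dirac F x) + CL (dirac G x)"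
  by (simp add: CL_dirac CL_pd_add distrib_left sum.distrib)

lemma CL_dirac_minus: "cs \<Omega> F \<Longrightarrow> cs \<Omega> G \<Longrightarrow> x \<in> \<Omega> \<Longrightarrow>
   CL (dirac (\<lambda>y. F y \<ominus>\<^sub>c G y) x) = CL (dirac F x) - CL (dirac G x)"
  by (simp add: CL_dirac CL_pd_minus right_diff_distrib sum_subtractf)

lemma CL_dirac_mult: "cs \<Omega> F \<Longrightarrow> cs \<Omega> G \<Longrightarrow> x \<in> \<Omega> \<Longrightarrow>
   CL (dirac (\<lambda>y. F y \<otimes>\<^sub>c G y) x) = CL (dirac F x) * CL (G x) + (\<Sum>j\<in>UNIV. E j * CL (F x) * CL (cl_pd j G x))"
  by (simp add: CL_dirac CL_pd_mult distrib_left sum.distrib sum_distrib_right mult.assoc)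

lemma CL_dirac_scale: "cs \<Omega> F \<Longrightarrow> x \<in> \<Omega> \<Longrightarrow>
   CL (dirac (\<lambda>y. c \<cdot>\<^sub>c F y) x) = sc c * CL (dirac F x)"
proof -
  assume a: "cs \<Omega> F" "x \<in> \<Omega>"
  have c: "E j * (sc c * X) = sc c * (E j * X)" for j and X :: "'n clf"
    by (metis mult.assoc sc_comm)
  show ?thesis using a by (simp add: CL_dirac CL_pd_scale sum_distrib_left c)
qed

lemma CL_dirac_sum: "finite I \<Longrightarrow> (\<And>i. i \<in> I \<Longrightarrow> cs \<Omega> (F i)) \<Longrightarrow> x \<in> \<Omega> \<Longrightarrow>
   CL (dirac (\<lambda>y. cl_sum (\<lambda>i. F i y) I) x) = (\<Sum>i\<in>I. CL (dirac (F i) x))"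
  by (simp add: CL_dirac CL_pd_sum sum_distrib_left) (rule sum.swap)

lemma CL_dirac_const: "CL (dirac (\<lambda>y. K) x) = 0"
  by (simp add: CL_dirac CL_pd_const)

lemma CL_dirac_cmult: "cs \<Omega> G \<Longrightarrow> x \<in> \<Omega> \<Longrightarrow>
   CL (dirac (\<lambda>y. K \<otimes>\<^sub>c G y) x) = (\<Sum>j\<in>UNIV. E j * CL K * CL (cl_pd j G x))"
  using CL_dirac_mult[of "\<lambda>y. K" G x] by (simp add: cs_const[OF op] CL_dirac_const)

end

lemma vec_pd:
  fixes F :: "(real, 'n::finite) vec \<Rightarrow> 'n cl"
  assumes op: "open \<Omega>" and v: "\<And>y. y \<in> \<Omega> \<Longrightarrow> grade 1 (F y) = F y" and x: "x \<in> \<Omega>"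
  shows "grade 1 (cl_pd k F x) = cl_pd k F x"
proof
  fix A :: "'n set"
  show "grade 1 (cl_pd k F x) A = cl_pd k F x A"
  proof (cases "card A = 1")
    case True then show ?thesis unfolding grade_def by simp
  next
    case False
    have "cl_pd k F x A = pd k (\<lambda>y. F y A) x" unfolding cl_pd_def by simp
    also have "\<dots> = pd k (\<lambda>y. 0) x"
      by (rule pd_local[OF op x]) (use grade1_zero[OF v False] in auto)
    also have "\<dots> = 0" by (rule pd_const)
    finally show ?thesis using False unfolding grade_def by simp
  qed
qed

lemma cl_e_vec: "grade 1 (cl_e j) = cl_e j"
  unfolding grade_def cl_e_def by (auto simp: fun_eq_iff)

lemma dirac_grades:
  fixes g :: "(real, 'n::{finite,linorder}) vec \<Rightarrow> 'n cl"
  assumes "\<And>k. grade 1 (cl_pd k g y) = cl_pd k g y" "card C \<noteq> 0" "card C \<noteq> 2"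
  shows "dirac g y C = 0"
  unfolding dirac_def cl_sum_def using vecprod_grades[OF cl_e_vec assms(1) assms(2,3)] by simp

theorem proposition6p3:
  fixes \<Omega> :: "((real, 'n::{finite,linorder}) vec) set"
    and lam :: complex
    and f g :: "(real, 'n) vec \<Rightarrow> 'n cl"
  assumes "CARD('n) > 1"
    and "open \<Omega>"
    and "lam \<noteq> 0"
    and "\<forall>x\<in>\<Omega>. is_vector (f x)" and "cl_smooth_on \<Omega> f"
    and "\<forall>x\<in>\<Omega>. is_vector (g x)" and "cl_smooth_on \<Omega> g"
    and "\<forall>x\<in>\<Omega>. schr (potential f) g x
                 \<oplus>\<^sub>c (2 \<cdot>\<^sub>c cl_sum (\<lambda>j. g x {j} \<cdot>\<^sub>c cl_pd j f x) UNIV)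
               = lam\<^sup>2 \<cdot>\<^sub>c g x"
  shows "\<forall>x\<in>\<Omega>. schr (potential f) (\<lambda>y. grade 0 (dirac_tw f g y) \<oplus>\<^sub>c grade 2 (dirac_tw f g y)) x
                 \<oplus>\<^sub>c (2 \<cdot>\<^sub>c cl_sum (\<lambda>j. grade 1 (cl_e j \<otimes>\<^sub>c grade 2 (dirac_tw f g x)) \<otimes>\<^sub>c cl_pd j f x) UNIV)
               = lam\<^sup>2 \<cdot>\<^sub>c (grade 0 (dirac_tw f g x) \<oplus>\<^sub>c grade 2 (dirac_tw f g x))"
proof
  fix x assume xO: "x \<in> \<Omega>"
  have op: "open \<Omega>" by (rule assms(2))
  have vf: "\<And>y. y \<in> \<Omega> \<Longrightarrow> grade 1 (f y) = f y" using assms(4) unfolding is_vector_def by blast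
  have vg: "\<And>y. y \<in> \<Omega> \<Longrightarrow> grade 1 (g y) = g y" using assms(6) unfolding is_vector_def by blast
  have sf: "cs \<Omega> f" and sg: "cs \<Omega> g" using assms(5,7) by auto
  have s_dg: "cs \<Omega> (dirac g)" by (rule cs_dirac[OF op sg])
  have s_ddg: "cs \<Omega> (dirac (dirac g))" by (rule cs_dirac[OF op s_dg])
  have s_df: "cs \<Omega> (dirac f)" by (rule cs_dirac[OF op sf])
  have s_fj: "\<And>j. cs \<Omega> (cl_pd j f)" by (rule cs_pd[OF op sf])
  have s_gj: "\<And>j. cs \<Omega> (cl_pd j g)" by (rule cs_pd[OF op sg])
  have s_gf: "cs \<Omega> (\<lambda>y. g y \<otimes>\<^sub>c f y)" by (rule cs_mult[OF op sg sf])
  have s_ff: "cs \<Omega> (\<lambda>y. f y \<otimes>\<^sub>c f y)" by (rule cs_mult[OF op sf sf])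
  have s_gfj: "\<And>j. cs \<Omega> (\<lambda>y. g y \<otimes>\<^sub>c cl_pd j f y)" by (rule cs_mult[OF op sg s_fj])
  have s_egfj: "\<And>j. cs \<Omega> (\<lambda>y. cl_e j \<otimes>\<^sub>c (g y \<otimes>\<^sub>c cl_pd j f y))" by (rule cs_mult[OF op cs_const[OF op] s_gfj])
  have s_efj: "\<And>j. cs \<Omega> (\<lambda>y. cl_e j \<otimes>\<^sub>c cl_pd j f y)" by (rule cs_mult[OF op cs_const[OF op] s_fj])
  have vgk: "\<And>k. grade 1 (cl_pd k g y) = cl_pd k g y" if "y \<in> \<Omega>" for y by (rule vec_pd[OF op vg that])

  define Dg where "Dg = dirac_tw f g"
  have Dg_eq: "Dg = (\<lambda>y. dirac g y \<ominus>\<^sub>c g y \<otimes>\<^sub>c f y)" unfolding Dg_def dirac_tw_def by (rule ext) (rule refl)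
  have s_Dg: "cs \<Omega> Dg" unfolding Dg_eq by (rule cs_minus[OF op s_dg s_gf])
  have grades: "grade 0 (Dg y) \<oplus>\<^sub>c grade 2 (Dg y) = Dg y" if "y \<in> \<Omega>" for y
  proof (rule grade02_split)
    fix C :: "'n set" assume c: "card C \<noteq> 0" "card C \<noteq> 2"
    have "dirac g y C = 0" by (rule dirac_grades[OF vgk[OF that] c])
    moreover have "(g y \<otimes>\<^sub>c f y) C = 0" by (rule vecprod_grades[OF vg[OF that] vf[OF that] c])
    ultimately show "Dg y C = 0" unfolding Dg_eq cl_minus_def by simp
  qed
  define H where "H = (\<lambda>y. grade 0 (Dg y) \<oplus>\<^sub>c grade 2 (Dg y))"
  have HD: "H y = Dg y" if "y \<in> \<Omega>" for y unfolding H_def using grades[OF that] .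
  have dH: "dirac H y = dirac Dg y" if "y \<in> \<Omega>" for y by (rule dirac_local[OF op that HD])
  have ddH: "dirac (dirac H) x = dirac (dirac Dg) x" by (rule dirac_local[OF op xO dH])

  define G where "G = CL (g x)"
  define Fv where "Fv = CL (f x)"
  define Gk where "Gk = (\<lambda>k. CL (cl_pd k g x))"
  define Fk where "Fk = (\<lambda>k. CL (cl_pd k f x))"
  define Fkj where "Fkj = (\<lambda>k j. CL (cl_pd k (cl_pd j f) x))"
  define d1 where "d1 = CL (dirac g x)"
  define d2 where "d2 = CL (dirac (dirac g) x)"
  define d3 where "d3 = CL (dirac (dirac (dirac g)) x)"

  define W where "W = (\<lambda>y. dirac (dirac g) y \<ominus>\<^sub>c ((dirac g y \<otimes>\<^sub>c f y) \<oplus>\<^sub>c cl_sum (\<lambda>j. cl_e j \<otimes>\<^sub>c (g y \<otimes>\<^sub>c cl_pd j f y)) UNIV))"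
  have DW: "dirac Dg y = W y" if "y \<in> \<Omega>" for y
  proof -
    have "CL (dirac Dg y) = CL (dirac (dirac g) y) - CL (dirac (\<lambda>y. g y \<otimes>\<^sub>c f y) y)"
      unfolding Dg_eq by (rule CL_dirac_minus[OF op s_dg s_gf that])
    also have "\<dots> = CL (W y)"
      unfolding W_def CL_dirac_mult[OF op sg sf that]
      by (simp add: CL_minus CL_add CL_sum CL_mult mult.assoc)
    finally show ?thesis by (simp add: CL_inj)
  qed
  have ddH_eq: "CL (dirac (dirac H) x) = d3 - (d2 * Fv + (\<Sum>k\<in>UNIV. E k * d1 * Fk k)
      + (\<Sum>j\<in>UNIV. \<Sum>k\<in>UNIV. E k * E j * (Gk k * Fk j + G * Fkj k j)))"
  proof -
    have "CL (dirac (dirac H) x) = CL (dirac W x)" unfolding ddH by (rule arg_cong[OF dirac_local[OF op xO DW]])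
    also have "\<dots> = d3 - (d2 * Fv + (\<Sum>k\<in>UNIV. E k * d1 * Fk k)
      + (\<Sum>j\<in>UNIV. \<Sum>k\<in>UNIV. E k * E j * (Gk k * Fk j + G * Fkj k j)))"
      unfolding W_def
      apply (subst CL_dirac_minus[OF op s_ddg cs_add[OF op cs_mult[OF op s_dg sf] cs_sum[OF op finite s_egfj]] xO])
      apply (subst CL_dirac_add[OF op cs_mult[OF op s_dg sf] cs_sum[OF op finite s_egfj] xO])
      apply (subst CL_dirac_mult[OF op s_dg sf xO])
      apply (subst CL_dirac_sum[OF op finite s_egfj xO])
      apply (subst CL_dirac_cmult[OF op s_gfj xO])
      apply (simp add: CL_pd_mult[OF op sg s_fj xO] d1_def d2_def d3_def Fv_def Fk_def Gk_def G_def Fkj_def)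
      done
    finally show ?thesis .
  qed
  define u where "u = potential f"
  have u_eq: "u = (\<lambda>y. dirac f y \<ominus>\<^sub>c f y \<otimes>\<^sub>c f y)" unfolding u_def potential_def by (rule ext) (rule refl)
  have s_u: "cs \<Omega> u" unfolding u_eq by (rule cs_minus[OF op s_df s_ff])
  have schr_eq: "schr u F y = dirac (dirac F) y \<oplus>\<^sub>c (F y \<otimes>\<^sub>c u y)" for F y
    unfolding schr_def laplace_def by simp
  define Sg where "Sg = (\<lambda>y. cl_sum (\<lambda>j. g y {j} \<cdot>\<^sub>c cl_pd j f y) UNIV)"
  have s_gjfj: "\<And>j. cs \<Omega> (\<lambda>y. g y {j} \<cdot>\<^sub>c cl_pd j f y)" by (rule cs_smul[OF op sg s_fj])
  have s_Sg: "cs \<Omega> Sg" unfolding Sg_def by (rule cs_sum[OF op finite s_gjfj])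
  define Eh where "Eh = (\<lambda>y. ((dirac (dirac g) y \<oplus>\<^sub>c (g y \<otimes>\<^sub>c u y)) \<oplus>\<^sub>c (2 \<cdot>\<^sub>c Sg y)) \<ominus>\<^sub>c (lam\<^sup>2 \<cdot>\<^sub>c g y))"
  have Eh0: "Eh y = (\<lambda>_. 0)" if "y \<in> \<Omega>" for y
  proof -
    have "(dirac (dirac g) y \<oplus>\<^sub>c (g y \<otimes>\<^sub>c u y)) \<oplus>\<^sub>c (2 \<cdot>\<^sub>c Sg y) = lam\<^sup>2 \<cdot>\<^sub>c g y"
      using assms(8) that unfolding Sg_def u_def[symmetric] schr_eq by blast
    then show ?thesis unfolding Eh_def cl_minus_def by (simp add: fun_eq_iff)
  qed
  have s_guu: "cs \<Omega> (\<lambda>y. g y \<otimes>\<^sub>c u y)" by (rule cs_mult[OF op sg s_u])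
  have s_A: "cs \<Omega> (\<lambda>y. dirac (dirac g) y \<oplus>\<^sub>c (g y \<otimes>\<^sub>c u y))" by (rule cs_add[OF op s_ddg s_guu])
  have s_B: "cs \<Omega> (\<lambda>y. 2 \<cdot>\<^sub>c Sg y)" by (rule cs_scale[OF op s_Sg])
  have s_C: "cs \<Omega> (\<lambda>y. lam\<^sup>2 \<cdot>\<^sub>c g y)" by (rule cs_scale[OF op sg])
  have dE0: "CL (dirac Eh x) = 0"
  proof -
    have "dirac Eh x = dirac (\<lambda>y. (\<lambda>_. 0)) x" by (rule dirac_local[OF op xO Eh0])
    then show ?thesis by (simp add: CL_dirac_const[OF op])
  qed
  have Ex0: "CL (Eh x) = 0" using Eh0[OF xO] by (simp add: CL_zero)
  have pd_u: "CL (cl_pd k u x) = (\<Sum>j\<in>UNIV. E j * Fkj k j) - (Fk k * Fv + Fv * Fk k)" for k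
  proof -
    have "CL (cl_pd k (dirac f) x) = (\<Sum>j\<in>UNIV. E j * Fkj k j)"
      unfolding dirac_eq[OF op]
      by (simp add: CL_pd_sum[OF op finite s_efj xO] CL_pd_mult[OF op cs_const[OF op] s_fj xO] CL_pd_const[OF op] Fkj_def)
    then show ?thesis unfolding u_eq
      by (simp add: CL_pd_minus[OF op s_df s_ff xO] CL_pd_mult[OF op sf sf xO] Fk_def Fv_def)
  qed
  have pd_Sg: "CL (cl_pd k Sg x) = (\<Sum>j\<in>UNIV. sc (cl_pd k g x {j}) * Fk j + sc (g x {j}) * Fkj k j)" for k
    unfolding Sg_def
    by (simp add: CL_pd_sum[OF op finite s_gjfj xO] CL_pd_smul[OF op sg s_fj xO] Fk_def Fkj_def)
  have dE_eq: "CL (dirac Eh x) = d3 + (d1 * CL (u x) + (\<Sum>k\<in>UNIV. E k * G * ((\<Sum>j\<in>UNIV. E j * Fkj k j) - (Fk k * Fv + Fv * Fk k))))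
                    + 2 * (\<Sum>k\<in>UNIV. E k * (\<Sum>j\<in>UNIV. sc (cl_pd k g x {j}) * Fk j + sc (g x {j}) * Fkj k j)) - sc (lam\<^sup>2) * d1"
  proof -
    have "CL (dirac Eh x) = CL (dirac (\<lambda>y. dirac (dirac g) y \<oplus>\<^sub>c (g y \<otimes>\<^sub>c u y)) x) + CL (dirac (\<lambda>y. 2 \<cdot>\<^sub>c Sg y) x)
        - CL (dirac (\<lambda>y. lam\<^sup>2 \<cdot>\<^sub>c g y) x)"
      unfolding Eh_def
      by (simp add: CL_dirac_minus[OF op cs_add[OF op s_A s_B] s_C xO] CL_dirac_add[OF op s_A s_B xO])
    also have "\<dots> = d3 + (d1 * CL (u x) + (\<Sum>j\<in>UNIV. E j * G * CL (cl_pd j u x))) + sc 2 * (\<Sum>k\<in>UNIV. E k * CL (cl_pd k Sg x)) - sc (lam\<^sup>2) * d1"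
      by (simp add: CL_dirac_add[OF op s_ddg s_guu xO] CL_dirac_mult[OF op sg s_u xO] CL_dirac_scale[OF op s_Sg xO]
          CL_dirac_scale[OF op sg xO] CL_dirac[of Sg x] d1_def d3_def G_def)
    also have "\<dots> = d3 + (d1 * CL (u x) + (\<Sum>k\<in>UNIV. E k * G * ((\<Sum>j\<in>UNIV. E j * Fkj k j) - (Fk k * Fv + Fv * Fk k))))
                    + 2 * (\<Sum>k\<in>UNIV. E k * (\<Sum>j\<in>UNIV. sc (cl_pd k g x {j}) * Fk j + sc (g x {j}) * Fkj k j)) - sc (lam\<^sup>2) * d1"
      by (simp add: pd_u pd_Sg sc_two)
    finally show ?thesis .
  qed
  have Ex_eq: "CL (Eh x) = d2 + G * CL (u x) + 2 * (\<Sum>j\<in>UNIV. sc (g x {j}) * Fk j) - sc (lam\<^sup>2) * G"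
    unfolding Eh_def Sg_def
    by (simp add: CL_minus CL_add CL_mult CL_scale CL_sum sc_two d2_def G_def Fk_def)
  have antiG: "E j * G + G * E j = - (2 * sc (g x {j}))" for j
    unfolding G_def vec_anticomm[OF vg[OF xO]] by (simp add: sc_mult sc_uminus sc_two)
  have antiGk: "E j * Gk k + Gk k * E j = - (2 * sc (cl_pd k g x {j}))" for k j
    unfolding Gk_def vec_anticomm[OF vgk[OF xO]] by (simp add: sc_mult sc_uminus sc_two)
  define h where "h = CL (Dg x)"
  define B where "B = (\<lambda>k. CL (grade 1 (cl_e k \<otimes>\<^sub>c grade 2 (Dg x))))"
  have h_split: "h = sc (Dg x {}) + CL (grade 2 (Dg x))"
    unfolding h_def using grades[OF xO] by (metis CL_add CL_grade0)
  have brk: "E k * h - h * E k = 2 * B k" for k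
  proof -
    have "E k * h - h * E k = E k * CL (grade 2 (Dg x)) - CL (grade 2 (Dg x)) * E k"
      unfolding h_split by (simp add: algebra_simps sc_comm)
    also have "\<dots> = 2 * B k" unfolding B_def by (rule biv_comm) simp
    finally show ?thesis .
  qed
  have h_def': "h = d1 - G * Fv" unfolding h_def Dg_eq by (simp add: CL_minus CL_mult d1_def G_def Fv_def)
  have S_def': "CL (dirac f x) = (\<Sum>j\<in>UNIV. E j * Fk j)" unfolding Fk_def by (rule CL_dirac)
  have U_def': "CL (u x) = CL (dirac f x) - Fv * Fv" unfolding u_eq by (simp add: CL_minus CL_mult Fv_def)
  have d1_def': "d1 = (\<Sum>k\<in>UNIV. E k * Gk k)" unfolding d1_def Gk_def by (rule CL_dirac)
  have ddH_def': "CL (dirac (dirac H) x) = d3 - (d2 * Fv + (\<Sum>k\<in>UNIV. E k * d1 * Fk k) + (\<Sum>k\<in>UNIV. \<Sum>j\<in>UNIV. E k * E j * Gk k * Fk j)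
                     + (\<Sum>k\<in>UNIV. \<Sum>j\<in>UNIV. E k * E j * G * Fkj k j))"
    unfolding ddH_eq by (simp add: distrib_left sum.distrib mult.assoc) (subst (1 2) sum.swap, rule refl)
  have main: "CL (dirac (dirac H) x) + h * CL (u x) + 2 * (\<Sum>k\<in>UNIV. B k * Fk k) = sc (lam\<^sup>2) * h"
    by (rule ring_identity[OF S_def' U_def' h_def' d1_def' antiG antiGk brk ddH_def' dE_eq Ex_eq dE0 Ex0])
  have HxD: "H x = Dg x" by (rule HD[OF xO])
  show "schr (potential f) (\<lambda>y. grade 0 (dirac_tw f g y) \<oplus>\<^sub>c grade 2 (dirac_tw f g y)) x
                 \<oplus>\<^sub>c (2 \<cdot>\<^sub>c cl_sum (\<lambda>j. grade 1 (cl_e j \<otimes>\<^sub>c grade 2 (dirac_tw f g x)) \<otimes>\<^sub>c cl_pd j f x) UNIV)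
               = lam\<^sup>2 \<cdot>\<^sub>c (grade 0 (dirac_tw f g x) \<oplus>\<^sub>c grade 2 (dirac_tw f g x))"
  proof -
    have l: "(\<lambda>y. grade 0 (dirac_tw f g y) \<oplus>\<^sub>c grade 2 (dirac_tw f g y)) = H" unfolding H_def Dg_def ..
    have "CL (schr u H x \<oplus>\<^sub>c (2 \<cdot>\<^sub>c cl_sum (\<lambda>j. grade 1 (cl_e j \<otimes>\<^sub>c grade 2 (Dg x)) \<otimes>\<^sub>c cl_pd j f x) UNIV))
        = CL (dirac (dirac H) x) + h * CL (u x) + 2 * (\<Sum>k\<in>UNIV. B k * Fk k)"
      unfolding schr_eq by (simp add: CL_add CL_mult CL_scale CL_sum sc_two HxD h_def B_def Fk_def)
    also have "\<dots> = CL (lam\<^sup>2 \<cdot>\<^sub>c H x)" using main by (simp add: CL_scale HxD h_def)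
    finally have "schr u H x \<oplus>\<^sub>c (2 \<cdot>\<^sub>c cl_sum (\<lambda>j. grade 1 (cl_e j \<otimes>\<^sub>c grade 2 (Dg x)) \<otimes>\<^sub>c cl_pd j f x) UNIV)
        = lam\<^sup>2 \<cdot>\<^sub>c H x" by (simp add: CL_inj)
    then show ?thesis unfolding l u_def[symmetric] Dg_def[symmetric] unfolding H_def by simp
  qed
qed

end
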